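(* Let $P\in\mathbb{C}[X_1,\dots,X_n]_{int}$ be an internal polynomial of degree $d\in{}^*\mathbb{N}$. Then (i) $P$ is bounded if and only if $P$ is absolutely bounded; (ii) $P$ is infinitesimal if and only if $P$ is absolutely infinitesimal.
   Context: ${}^*\mathbb{C}$ is an ultrapower of $\mathbb{C}$ by a nonprincipal ultrafilter; ${}^b\mathbb{C}$ (resp. ${}^i\mathbb{C}$) denotes the elements $z$ with $|z|\le r$ for some standard real $r$ (resp. $|z|<r$ for every standard real $r>0$). For finite $n$, $\mathbb{C}[X_1,\dots,X_n]_{int}$ is the ultrapower of $\mathbb{C}[X_1,\dots,X_n]$; an internal polynomial $P=\sum_{|\nu|\le d}a_\nu X^\nu$ ($a_\nu\in{}^*\mathbb{C}$, $\nu\in{}^*\mathbb{N}^n$) is viewed as an internal function ${}^*\mathbb{C}^n\to{}^*\mathbb{C}$, and $|P|:=\sum_{|\nu|\le d}|a_\nu|X^\nu$. $P$ is bounded (resp. infinitesimal) if $P({}^b\mathbb{C}^n)\subset{}^b\mathbb{C}$ (resp. $\subset{}^i\mathbb{C}$), and absolutely bounded (resp. absolutely infinitesimal) if $|P|({}^b\mathbb{C}^n)\subset{}^b\mathbb{C}$ (resp. $\subset{}^i\mathbb{C}$). *)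

theory Defs
  imports Complex_Main
begin

text \<open>The ultrapower is modelled concretely: an element of the ultrapower of X by an
ultrafilter U on an index type 'i is represented by a family 'i => X; all predicates
below are invariant under U-almost-everywhere equality.\<close>

definition is_ultrafilter :: "'i filter \<Rightarrow> bool" where
  "is_ultrafilter U \<longleftrightarrow> U \<noteq> bot \<and> (\<forall>P. eventually P U \<or> eventually (\<lambda>i. \<not> P i) U)"

definition nonprincipal :: "'i filter \<Rightarrow> bool" where
  "nonprincipal U \<longleftrightarrow> (\<forall>x. \<not> eventually (\<lambda>i. i = x) U)"

definition ibounded :: "'i filter \<Rightarrow> ('i \<Rightarrow> complex) \<Rightarrow> bool" where
  "ibounded U z \<longleftrightarrow> (\<exists>r::real. eventually (\<lambda>i. norm (z i) \<le> r) U)"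

definition iinfinitesimal :: "'i filter \<Rightarrow> ('i \<Rightarrow> complex) \<Rightarrow> bool" where
  "iinfinitesimal U z \<longleftrightarrow> (\<forall>r::real. r > 0 \<longrightarrow> eventually (\<lambda>i. norm (z i) < r) U)"

text \<open>Multi-indices nu in N^n of total degree at most d (as functions nat => nat vanishing
from n on).\<close>
definition multi_idx :: "nat \<Rightarrow> nat \<Rightarrow> (nat \<Rightarrow> nat) set" where
  "multi_idx n d = {\<nu>. (\<forall>k\<ge>n. \<nu> k = 0) \<and> (\<Sum>k<n. \<nu> k) \<le> d}"

definition peval :: "nat \<Rightarrow> nat \<Rightarrow> ((nat \<Rightarrow> nat) \<Rightarrow> complex) \<Rightarrow> (nat \<Rightarrow> complex) \<Rightarrow> complex" where
  "peval n d c x = (\<Sum>\<nu>\<in>multi_idx n d. c \<nu> * (\<Prod>k<n. x k ^ \<nu> k))"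

text \<open>An internal polynomial in n variables is given by a family of degrees d i and
coefficient functions a i; |P| has coefficients |a_nu|.\<close>
definition abs_coeffs :: "((nat \<Rightarrow> nat) \<Rightarrow> complex) \<Rightarrow> ((nat \<Rightarrow> nat) \<Rightarrow> complex)" where
  "abs_coeffs c = (\<lambda>\<nu>. complex_of_real (norm (c \<nu>)))"

definition ipoly_bounded :: "'i filter \<Rightarrow> nat \<Rightarrow> ('i \<Rightarrow> nat) \<Rightarrow> ('i \<Rightarrow> (nat \<Rightarrow> nat) \<Rightarrow> complex) \<Rightarrow> bool" where
  "ipoly_bounded U n d a \<longleftrightarrow>
     (\<forall>z :: 'i \<Rightarrow> nat \<Rightarrow> complex. (\<forall>k<n. ibounded U (\<lambda>i. z i k)) \<longrightarrow>
        ibounded U (\<lambda>i. peval n (d i) (a i) (z i)))"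

definition ipoly_infinitesimal :: "'i filter \<Rightarrow> nat \<Rightarrow> ('i \<Rightarrow> nat) \<Rightarrow> ('i \<Rightarrow> (nat \<Rightarrow> nat) \<Rightarrow> complex) \<Rightarrow> bool" where
  "ipoly_infinitesimal U n d a \<longleftrightarrow>
     (\<forall>z :: 'i \<Rightarrow> nat \<Rightarrow> complex. (\<forall>k<n. ibounded U (\<lambda>i. z i k)) \<longrightarrow>
        iinfinitesimal U (\<lambda>i. peval n (d i) (a i) (z i)))"

definition ipoly_abs_bounded where
  "ipoly_abs_bounded U n d a \<longleftrightarrow> ipoly_bounded U n d (\<lambda>i. abs_coeffs (a i))"

definition ipoly_abs_infinitesimal where
  "ipoly_abs_infinitesimal U n d a \<longleftrightarrow> ipoly_infinitesimal U n d (\<lambda>i. abs_coeffs (a i))"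

end

theory Submission imports Defs "HOL-Analysis.Analysis" "HOL-Library.FuncSet" begin

lemma root_sum:
  fixes N m l :: nat
  assumes "m < N" "l < N"
  defines "w \<equiv> exp (2 * pi * \<i> / of_nat N)"
  shows "(\<Sum>t<N. (w ^ m * cnj w ^ l) ^ t) = (if m = l then of_nat N else 0)"
proof -
  define q where "q = (real m - real l) / real N"
  have N0: "N > 0" using assms by auto
  have "w ^ m * cnj w ^ l = exp (2 * pi * \<i> * of_real q)"
  proof -
    have "w ^ m = exp (of_nat m * (2 * pi * \<i> / of_nat N))"
      unfolding w_def by (rule exp_of_nat_mult[symmetric])
    moreover have "cnj w ^ l = exp (of_nat l * (- 2 * pi * \<i> / of_nat N))"
      unfolding w_def exp_cnj by (subst exp_of_nat_mult) simp
    ultimately have "w ^ m * cnj w ^ l = exp (of_nat m * (2 * pi * \<i> / of_nat N) + of_nat l * (- 2 * pi * \<i> / of_nat N))"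
      by (simp only: exp_add)
    also have "of_nat m * (2 * pi * \<i> / of_nat N) + of_nat l * (- 2 * pi * \<i> / of_nat N) = 2 * pi * \<i> * of_real q"
      unfolding q_def using N0 by (simp add: field_simps)
    finally show ?thesis .
  qed
  note z = this
  show ?thesis
  proof (cases "m = l")
    case True
    then have "w ^ m * cnj w ^ l = 1" unfolding z q_def by simp
    with True show ?thesis by simp
  next
    case False
    have ne: "exp (2 * pi * \<i> * of_real q) \<noteq> 1"
    proof
      assume "exp (2 * pi * \<i> * of_real q) = 1"
      then obtain k :: int where k: "2 * pi * q = of_int (2 * k) * pi" by (auto simp: exp_eq_1)
      then have "q = of_int k" by simp
      then have "real m - real l = of_int k * real N" unfolding q_def using N0 by (simp add: field_simps)
      then have "real_of_int (int m - int l) = real_of_int (k * int N)" by simp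
      then have e: "int m - int l = k * int N" by (simp only: of_int_eq_iff)
      moreover have "\<bar>int m - int l\<bar> < int N" using assms by linarith
      moreover have "k \<noteq> 0" using e False by auto
      then have "\<bar>k\<bar> * int N \<ge> 1 * int N" by (intro mult_right_mono) auto
      ultimately have False by (simp add: abs_mult)
      then have "k = 0" ..
      with \<open>int m - int l = k * int N\<close> False show False by simp
    qed
    have pw: "exp (2 * pi * \<i> * of_real q) ^ N = 1"
    proof -
      have "exp (2 * pi * \<i> * of_real q) ^ N = exp (of_nat N * (2 * pi * \<i> * of_real q))"
        by (rule exp_of_nat_mult[symmetric])
      also have "of_nat N * (2 * pi * \<i> * of_real q) = (2 * of_int (int m - int l) * pi) * \<i>"
        unfolding q_def using N0 by (simp add: field_simps)
      also have "exp \<dots> = 1" by (rule exp_integer_2pi) simp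
      finally show ?thesis .
    qed
    show ?thesis using False ne pw unfolding z by (simp add: sum_gp_strict)
  qed
qed

definition ext0 :: "nat \<Rightarrow> (nat \<Rightarrow> nat) \<Rightarrow> (nat \<Rightarrow> nat)" where
  "ext0 n g = (\<lambda>k. if k < n then g k else 0)"

lemma multi_idx_le: "\<nu> \<in> multi_idx n d \<Longrightarrow> k < n \<Longrightarrow> \<nu> k \<le> d"
  unfolding multi_idx_def
  using member_le_sum[of k "{..<n}" \<nu>] by auto

lemma multi_idx_sub: "multi_idx n d \<subseteq> ext0 n ` PiE {..<n} (\<lambda>_. {..d})"
proof
  fix \<nu> assume h: "\<nu> \<in> multi_idx n d"
  have "\<nu> = ext0 n (restrict \<nu> {..<n})"
    using h unfolding ext0_def multi_idx_def by (auto simp: fun_eq_iff)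
  moreover have "restrict \<nu> {..<n} \<in> PiE {..<n} (\<lambda>_. {..d})"
    using multi_idx_le[OF h] by auto
  ultimately show "\<nu> \<in> ext0 n ` PiE {..<n} (\<lambda>_. {..d})" by blast
qed

lemma finite_multi_idx: "finite (multi_idx n d)"
  by (rule finite_subset[OF multi_idx_sub]) (auto intro: finite_PiE)

lemma inj_ext0: "inj_on (ext0 n) (PiE {..<n} B)"
  unfolding inj_on_def ext0_def PiE_def extensional_def
  by (auto simp: fun_eq_iff) metis

lemma coeff_extract:
  fixes c :: "(nat \<Rightarrow> nat) \<Rightarrow> complex" and R :: real and d n :: nat
  defines "N \<equiv> Suc d"
  defines "w \<equiv> exp (2 * pi * \<i> / of_nat N)"
  defines "G \<equiv> PiE {..<n} (\<lambda>_. {..<N})"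
  assumes nu: "\<nu> \<in> multi_idx n d"
  shows "(\<Sum>g\<in>G. peval n d c (\<lambda>k. of_real R * w ^ (g k)) * (\<Prod>k<n. cnj w ^ (\<nu> k * g k)))
        = of_nat N ^ n * c \<nu> * of_real R ^ (\<Sum>k<n. \<nu> k)"
proof -
  let ?M = "multi_idx n d"
  have fG: "finite G" unfolding G_def by (auto intro: finite_PiE)
  have trm: "(of_real R * w ^ t) ^ m * cnj w ^ (l * t) = of_real R ^ m * (w ^ m * cnj w ^ l) ^ t"
    for t m l :: nat
    by (simp add: power_mult_distrib power_mult[symmetric] mult.commute mult.left_commute)
  have "(\<Sum>g\<in>G. peval n d c (\<lambda>k. of_real R * w ^ (g k)) * (\<Prod>k<n. cnj w ^ (\<nu> k * g k)))
      = (\<Sum>g\<in>G. \<Sum>\<mu>\<in>?M. c \<mu> * (\<Prod>k<n. of_real R ^ \<mu> k * (w ^ \<mu> k * cnj w ^ \<nu> k) ^ g k))"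
    unfolding peval_def sum_distrib_right
    by (intro sum.cong refl) (simp add: mult.assoc prod.distrib[symmetric] trm)
  also have "\<dots> = (\<Sum>\<mu>\<in>?M. c \<mu> * (\<Sum>g\<in>G. \<Prod>k<n. of_real R ^ \<mu> k * (w ^ \<mu> k * cnj w ^ \<nu> k) ^ g k))"
    by (subst sum.swap) (simp add: sum_distrib_left)
  also have "\<dots> = (\<Sum>\<mu>\<in>?M. c \<mu> * (\<Prod>k<n. \<Sum>t<N. of_real R ^ \<mu> k * (w ^ \<mu> k * cnj w ^ \<nu> k) ^ t))"
    unfolding G_def by (subst prod_sum_PiE) auto
  also have "\<dots> = (\<Sum>\<mu>\<in>?M. c \<mu> * (\<Prod>k<n. of_real R ^ \<mu> k * (if \<mu> k = \<nu> k then of_nat N else 0)))"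
  proof (intro sum.cong refl arg_cong2[where f="(*)"] prod.cong)
    fix \<mu> k assume "\<mu> \<in> ?M" "k \<in> {..<n}"
    then have "\<mu> k < N" "\<nu> k < N" using multi_idx_le nu unfolding N_def by (auto simp: less_Suc_eq_le)
    then show "(\<Sum>t<N. of_real R ^ \<mu> k * (w ^ \<mu> k * cnj w ^ \<nu> k) ^ t) =
         of_real R ^ \<mu> k * (if \<mu> k = \<nu> k then of_nat N else 0)"
    proof -
      have "(\<Sum>t<N. (w ^ \<mu> k * cnj w ^ \<nu> k) ^ t) = (if \<mu> k = \<nu> k then of_nat N else 0)"
        using root_sum[of "\<mu> k" N "\<nu> k"] \<open>\<mu> k < N\<close> \<open>\<nu> k < N\<close> unfolding w_def by blast
      then show ?thesis by (simp only: sum_distrib_left[symmetric])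
    qed
  qed
  also have "\<dots> = (\<Sum>\<mu>\<in>?M. if \<mu> = \<nu> then c \<nu> * (\<Prod>k<n. of_real R ^ \<nu> k * of_nat N) else 0)"
  proof (intro sum.cong refl)
    fix \<mu> assume mu: "\<mu> \<in> ?M"
    show "c \<mu> * (\<Prod>k<n. of_real R ^ \<mu> k * (if \<mu> k = \<nu> k then of_nat N else 0)) =
          (if \<mu> = \<nu> then c \<nu> * (\<Prod>k<n. of_real R ^ \<nu> k * of_nat N) else 0)"
    proof (cases "\<mu> = \<nu>")
      case False
      then obtain k where "\<mu> k \<noteq> \<nu> k" by auto
      moreover have "k < n"
      proof (rule ccontr)
        assume "\<not> k < n"
        then show False using mu nu \<open>\<mu> k \<noteq> \<nu> k\<close> unfolding multi_idx_def by auto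
      qed
      ultimately show ?thesis using False by (auto intro!: prod_zero)
    qed simp
  qed
  also have "\<dots> = c \<nu> * (\<Prod>k<n. of_real R ^ \<nu> k * of_nat N)"
    using nu finite_multi_idx by simp
  also have "\<dots> = of_nat N ^ n * c \<nu> * of_real R ^ (\<Sum>k<n. \<nu> k)"
    by (simp add: prod.distrib power_sum)
  finally show ?thesis .
qed

lemma norm_w1: "norm (exp (2 * pi * \<i> / of_nat N)) = 1"
  by (simp add: norm_exp_eq_Re)

lemma coeff_bound:
  fixes c :: "(nat \<Rightarrow> nat) \<Rightarrow> complex" and R M :: real and d n :: nat
  defines "N \<equiv> Suc d"
  defines "w \<equiv> exp (2 * pi * \<i> / of_nat N)"
  defines "G \<equiv> PiE {..<n} (\<lambda>_. {..<N})"
  assumes R: "R > 0"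
  assumes bd: "\<And>g. g \<in> G \<Longrightarrow> norm (peval n d c (\<lambda>k. of_real R * w ^ (g k))) \<le> M"
  assumes nu: "\<nu> \<in> multi_idx n d"
  shows "norm (c \<nu>) * R ^ (\<Sum>k<n. \<nu> k) \<le> M"
proof -
  have fG: "finite G" unfolding G_def by (auto intro: finite_PiE)
  have cG: "card G = N ^ n" unfolding G_def by (simp add: card_PiE)
  have nw: "norm w = 1" unfolding w_def by (rule norm_w1)
  have "real N ^ n * (norm (c \<nu>) * R ^ (\<Sum>k<n. \<nu> k)) = norm (of_nat N ^ n * c \<nu> * of_real R ^ (\<Sum>k<n. \<nu> k))"
    using R by (simp add: norm_mult norm_power)
  also have "\<dots> = norm (\<Sum>g\<in>G. peval n d c (\<lambda>k. of_real R * w ^ (g k)) * (\<Prod>k<n. cnj w ^ (\<nu> k * g k)))"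
    unfolding w_def G_def N_def using coeff_extract[OF nu, of c R] by simp
  also have "\<dots> \<le> (\<Sum>g\<in>G. norm (peval n d c (\<lambda>k. of_real R * w ^ (g k)) * (\<Prod>k<n. cnj w ^ (\<nu> k * g k))))"
    by (rule norm_sum)
  also have "\<dots> = (\<Sum>g\<in>G. norm (peval n d c (\<lambda>k. of_real R * w ^ (g k))))"
    by (simp add: norm_mult prod_norm[symmetric] norm_power nw)
  also have "\<dots> \<le> (\<Sum>g\<in>G. M)" by (intro sum_mono bd)
  also have "\<dots> = real N ^ n * M" using cG by simp
  finally show ?thesis using N_def by simp
qed

lemma zero_multi_idx: "(\<lambda>_. 0) \<in> multi_idx n d"
  unfolding multi_idx_def by simp

lemma geom_half: "(\<Sum>t\<le>d. (1/2::real) ^ t) = 2 - (1/2) ^ d"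
  by (induction d) (auto simp: field_simps)

lemma sum_multi_idx_prod:
  fixes f :: "nat \<Rightarrow> nat \<Rightarrow> real"
  assumes "\<And>k t. f k t \<ge> 0"
  shows "(\<Sum>\<nu>\<in>multi_idx n d. \<Prod>k<n. f k (\<nu> k)) \<le> (\<Prod>k<n. \<Sum>t\<le>d. f k t)"
proof -
  have "(\<Sum>\<nu>\<in>multi_idx n d. \<Prod>k<n. f k (\<nu> k)) \<le> (\<Sum>\<nu>\<in>ext0 n ` PiE {..<n} (\<lambda>_. {..d}). \<Prod>k<n. f k (\<nu> k))"
  proof (rule sum_mono2)
    show "finite (ext0 n ` PiE {..<n} (\<lambda>_. {..d}))" by (auto intro: finite_PiE)
    show "multi_idx n d \<subseteq> ext0 n ` PiE {..<n} (\<lambda>_. {..d})" by (rule multi_idx_sub)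
    show "\<And>b. b \<in> ext0 n ` PiE {..<n} (\<lambda>_. {..d}) - multi_idx n d \<Longrightarrow> 0 \<le> (\<Prod>k<n. f k (b k))"
      by (intro prod_nonneg assms)
  qed
  also have "\<dots> = (\<Sum>g\<in>PiE {..<n} (\<lambda>_. {..d}). \<Prod>k<n. f k (ext0 n g k))"
    by (rule sum.reindex[OF inj_ext0, unfolded comp_def])
  also have "\<dots> = (\<Sum>g\<in>PiE {..<n} (\<lambda>_. {..d}). \<Prod>k<n. f k (g k))"
    unfolding ext0_def by (intro sum.cong prod.cong refl) auto
  also have "\<dots> = (\<Prod>k<n. \<Sum>t\<le>d. f k t)"
    by (rule prod_sum_PiE[symmetric]) auto
  finally show ?thesis .
qed

lemma norm_peval_le:
  "norm (peval n d c z) \<le> (\<Sum>\<nu>\<in>multi_idx n d. norm (c \<nu>) * (\<Prod>k<n. norm (z k) ^ \<nu> k))"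
  unfolding peval_def
  by (rule order_trans[OF norm_sum]) (simp add: norm_mult prod_norm[symmetric] norm_power)

lemma peval_abs_real:
  "peval n d (abs_coeffs c) (\<lambda>k. of_real (norm (z k))) =
   of_real (\<Sum>\<nu>\<in>multi_idx n d. norm (c \<nu>) * (\<Prod>k<n. norm (z k) ^ \<nu> k))"
  unfolding peval_def abs_coeffs_def by simp

lemma abs_bound:
  fixes c :: "(nat \<Rightarrow> nat) \<Rightarrow> complex" and r M :: real
  assumes r: "r > 0"
  assumes cb: "\<And>\<nu>. \<nu> \<in> multi_idx n d \<Longrightarrow> norm (c \<nu>) * (2 * r) ^ (\<Sum>k<n. \<nu> k) \<le> M"
  assumes w: "\<And>k. k < n \<Longrightarrow> norm (w k) \<le> r"
  shows "norm (peval n d (abs_coeffs c) w) \<le> 2 ^ n * M"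
proof -
  have "norm (c (\<lambda>_. 0)) \<le> M" using cb[OF zero_multi_idx] by simp
  then have M0: "M \<ge> 0" using norm_ge_zero order_trans by blast
  have "norm (peval n d (abs_coeffs c) w) \<le> (\<Sum>\<nu>\<in>multi_idx n d. norm (abs_coeffs c \<nu>) * (\<Prod>k<n. norm (w k) ^ \<nu> k))"
    by (rule norm_peval_le)
  also have "\<dots> \<le> (\<Sum>\<nu>\<in>multi_idx n d. M * (\<Prod>k<n. (1/2) ^ \<nu> k))"
  proof (rule sum_mono)
    fix \<nu> assume nu: "\<nu> \<in> multi_idx n d"
    have "(\<Prod>k<n. norm (w k) ^ \<nu> k) \<le> (\<Prod>k<n. r ^ \<nu> k)"
      by (intro prod_mono conjI power_mono w) auto
    also have "\<dots> = (\<Prod>k<n. (2 * r) ^ \<nu> k * (1/2) ^ \<nu> k)"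
      by (intro prod.cong refl) (subst power_mult_distrib[symmetric], simp)
    also have "\<dots> = (2 * r) ^ (\<Sum>k<n. \<nu> k) * (\<Prod>k<n. (1/2) ^ \<nu> k)"
      by (simp only: prod.distrib power_sum)
    finally have "norm (c \<nu>) * (\<Prod>k<n. norm (w k) ^ \<nu> k) \<le> norm (c \<nu>) * ((2 * r) ^ (\<Sum>k<n. \<nu> k) * (\<Prod>k<n. (1/2) ^ \<nu> k))"
      by (intro mult_left_mono) auto
    also have "\<dots> = (norm (c \<nu>) * (2 * r) ^ (\<Sum>k<n. \<nu> k)) * (\<Prod>k<n. (1/2) ^ \<nu> k)"
      by simp
    also have "\<dots> \<le> M * (\<Prod>k<n. (1/2) ^ \<nu> k)"
      by (intro mult_right_mono cb nu prod_nonneg) auto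
    finally show "norm (abs_coeffs c \<nu>) * (\<Prod>k<n. norm (w k) ^ \<nu> k) \<le> M * (\<Prod>k<n. (1/2) ^ \<nu> k)"
      by (simp add: abs_coeffs_def)
  qed
  also have "\<dots> = M * (\<Sum>\<nu>\<in>multi_idx n d. \<Prod>k<n. (1/2::real) ^ \<nu> k)"
    by (simp add: sum_distrib_left)
  also have "\<dots> \<le> M * (\<Prod>k<n. \<Sum>t\<le>d. (1/2::real) ^ t)"
    by (intro mult_left_mono M0 sum_multi_idx_prod[where f="\<lambda>k t. (1/2::real) ^ t"]) simp
  also have "\<dots> \<le> M * (\<Prod>k<n. 2)"
  proof (intro mult_left_mono M0 prod_mono conjI)
    fix k show "0 \<le> (\<Sum>t\<le>d. (1/2::real) ^ t)" by (intro sum_nonneg) simp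
    have "(1/2::real) ^ d \<ge> 0" by simp
    then show "(\<Sum>t\<le>d. (1/2::real) ^ t) \<le> 2" unfolding geom_half by linarith
  qed
  finally show ?thesis by (simp add: mult.commute)
qed

lemma key:
  fixes c :: "(nat \<Rightarrow> nat) \<Rightarrow> complex" and \<rho> :: real
  assumes rho: "\<rho> > 0"
  shows "\<exists>x. (\<forall>k. norm (x k) = 2 * \<rho>) \<and>
    (\<forall>w. (\<forall>k<n. norm (w k) \<le> \<rho>) \<longrightarrow> norm (peval n d (abs_coeffs c) w) \<le> 2 ^ n * norm (peval n d c x))"
proof -
  define N where "N = Suc d"
  define w where "w = exp (2 * pi * \<i> / of_nat N)"
  define G where "G = PiE {..<n} (\<lambda>_. {..<N})"
  define X where "X g = (\<lambda>k. of_real (2 * \<rho>) * w ^ (g k))" for g :: "nat \<Rightarrow> nat"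
  define f where "f g = norm (peval n d c (X g))" for g
  have fG: "finite G" unfolding G_def by (auto intro: finite_PiE)
  have neG: "G \<noteq> {}" unfolding G_def N_def by (auto simp: PiE_eq_empty_iff)
  have "Max (f ` G) \<in> f ` G" using fG neG by (intro Max_in) auto
  then obtain g0 where g0G: "g0 \<in> G" and g0M: "f g0 = Max (f ` G)" by auto
  have g0: "g0 \<in> G" "\<And>g. g \<in> G \<Longrightarrow> f g \<le> f g0"
    using g0G g0M fG by (auto intro: Max_ge)
  have nw: "norm w = 1" unfolding w_def by (rule norm_w1)
  have cb: "norm (c \<nu>) * (2 * \<rho>) ^ (\<Sum>k<n. \<nu> k) \<le> f g0" if "\<nu> \<in> multi_idx n d" for \<nu>
    using coeff_bound[where R="2 * \<rho>" and d=d and n=n and M="f g0" and c=c and \<nu>=\<nu>] that rho g0(2)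
    unfolding f_def X_def G_def w_def N_def by auto
  show ?thesis
  proof (intro exI conjI allI impI)
    fix k show "norm (X g0 k) = 2 * \<rho>" unfolding X_def using rho by (simp add: norm_mult norm_power nw)
  next
    fix w' :: "nat \<Rightarrow> complex" assume "\<forall>k<n. norm (w' k) \<le> \<rho>"
    then show "norm (peval n d (abs_coeffs c) w') \<le> 2 ^ n * norm (peval n d c (X g0))"
      using abs_bound[OF rho cb] unfolding f_def by blast
  qed
qed

lemma get_rho:
  fixes z :: "'i \<Rightarrow> nat \<Rightarrow> complex"
  assumes "\<forall>k<n. ibounded U (\<lambda>i. z i k)"
  shows "\<exists>\<rho>>0. eventually (\<lambda>i. \<forall>k<n. norm (z i k) \<le> \<rho>) U"
proof -
  from assms obtain r where r: "\<And>k. k < n \<Longrightarrow> eventually (\<lambda>i. norm (z i k) \<le> r k) U"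
    unfolding ibounded_def by metis
  define \<rho> where "\<rho> = 1 + (\<Sum>k<n. \<bar>r k\<bar>)"
  have le: "r k \<le> \<rho>" if "k < n" for k
  proof -
    have "\<bar>r k\<bar> \<le> (\<Sum>k<n. \<bar>r k\<bar>)" by (rule member_le_sum) (use that in auto)
    then show ?thesis unfolding \<rho>_def by linarith
  qed
  have "\<rho> > 0" unfolding \<rho>_def by (smt (verit) sum_nonneg abs_ge_zero)
  moreover have "\<forall>k\<in>{..<n}. eventually (\<lambda>i. norm (z i k) \<le> \<rho>) U"
  proof
    fix k assume "k \<in> {..<n}"
    then show "eventually (\<lambda>i. norm (z i k) \<le> \<rho>) U"
      by (intro eventually_mono[OF r]) (use le[of k] in auto)
  qed
  then have "eventually (\<lambda>i. \<forall>k\<in>{..<n}. norm (z i k) \<le> \<rho>) U"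
    by (rule eventually_ball_finite[OF finite_lessThan])
  then have "eventually (\<lambda>i. \<forall>k<n. norm (z i k) \<le> \<rho>) U"
    by (rule eventually_mono) auto
  ultimately show ?thesis by blast
qed

theorem proposition1p4p4:
  fixes U :: "'i filter" and n :: nat and d :: "'i \<Rightarrow> nat"
    and a :: "'i \<Rightarrow> (nat \<Rightarrow> nat) \<Rightarrow> complex"
  assumes "is_ultrafilter U" and "nonprincipal U"
  shows "(ipoly_bounded U n d a \<longleftrightarrow> ipoly_abs_bounded U n d a)
       \<and> (ipoly_infinitesimal U n d a \<longleftrightarrow> ipoly_abs_infinitesimal U n d a)"
proof -
  have main: "\<exists>x. (\<forall>k<n. ibounded U (\<lambda>i. x i k)) \<and>
      eventually (\<lambda>i. norm (peval n (d i) (abs_coeffs (a i)) (z i)) \<le> 2 ^ n * norm (peval n (d i) (a i) (x i))) U"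
    if z: "\<forall>k<n. ibounded U (\<lambda>i. z i k)" for z :: "'i \<Rightarrow> nat \<Rightarrow> complex"
  proof -
    obtain \<rho> where rho: "\<rho> > 0" and ev: "eventually (\<lambda>i. \<forall>k<n. norm (z i k) \<le> \<rho>) U"
      using get_rho[OF z] by blast
    have "\<forall>i. \<exists>x. (\<forall>k. norm (x k) = 2 * \<rho>) \<and>
      (\<forall>w. (\<forall>k<n. norm (w k) \<le> \<rho>) \<longrightarrow> norm (peval n (d i) (abs_coeffs (a i)) w) \<le> 2 ^ n * norm (peval n (d i) (a i) x))"
      using key[OF rho] by blast
    then obtain x where x: "\<And>i k. norm (x i k) = 2 * \<rho>"
      and xb: "\<And>i w. (\<forall>k<n. norm (w k) \<le> \<rho>) \<Longrightarrow> norm (peval n (d i) (abs_coeffs (a i)) w) \<le> 2 ^ n * norm (peval n (d i) (a i) (x i))"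
      by metis
    show ?thesis
    proof (intro exI conjI allI impI)
      fix k assume "k < n" show "ibounded U (\<lambda>i. x i k)"
        unfolding ibounded_def using x by (intro exI[of _ "2 * \<rho>"]) simp
    next
      show "eventually (\<lambda>i. norm (peval n (d i) (abs_coeffs (a i)) (z i)) \<le> 2 ^ n * norm (peval n (d i) (a i) (x i))) U"
        using ev by (rule eventually_mono) (rule xb)
    qed
  qed
  have bck: "norm (peval n (d i) (a i) (z i)) \<le> norm (peval n (d i) (abs_coeffs (a i)) (\<lambda>k. of_real (norm (z i k))))"
    for z :: "'i \<Rightarrow> nat \<Rightarrow> complex" and i
  proof -
    have e: "peval n (d i) (abs_coeffs (a i)) (\<lambda>k. of_real (norm (z i k))) =
      of_real (\<Sum>\<nu>\<in>multi_idx n (d i). norm (a i \<nu>) * (\<Prod>k<n. norm (z i k) ^ \<nu> k))"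
      by (rule peval_abs_real)
    have "(\<Sum>\<nu>\<in>multi_idx n (d i). norm (a i \<nu>) * (\<Prod>k<n. norm (z i k) ^ \<nu> k)) \<ge> 0"
      by (intro sum_nonneg mult_nonneg_nonneg prod_nonneg) auto
    then show ?thesis using norm_peval_le[of n "d i" "a i" "z i"] by (simp only: e norm_of_real abs_of_nonneg)
  qed
  have bk: "\<forall>k<n. ibounded U (\<lambda>i. complex_of_real (norm (z i k)))"
    if "\<forall>k<n. ibounded U (\<lambda>i. z i k)" for z :: "'i \<Rightarrow> nat \<Rightarrow> complex"
    using that unfolding ibounded_def by simp
  have A: "ipoly_bounded U n d a \<longleftrightarrow> ipoly_abs_bounded U n d a"
    unfolding ipoly_abs_bounded_def ipoly_bounded_def
  proof (intro iffI allI impI)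
    fix z :: "'i \<Rightarrow> nat \<Rightarrow> complex"
    assume H: "\<forall>z. (\<forall>k<n. ibounded U (\<lambda>i. z i k)) \<longrightarrow> ibounded U (\<lambda>i. peval n (d i) (a i) (z i))"
      and z: "\<forall>k<n. ibounded U (\<lambda>i. z i k)"
    obtain x where xb: "\<forall>k<n. ibounded U (\<lambda>i. x i k)"
      and ev: "eventually (\<lambda>i. norm (peval n (d i) (abs_coeffs (a i)) (z i)) \<le> 2 ^ n * norm (peval n (d i) (a i) (x i))) U"
      using main[OF z] by blast
    from H xb obtain M where "eventually (\<lambda>i. norm (peval n (d i) (a i) (x i)) \<le> M) U"
      unfolding ibounded_def by blast
    with ev have "eventually (\<lambda>i. norm (peval n (d i) (abs_coeffs (a i)) (z i)) \<le> 2 ^ n * M) U"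
      by eventually_elim (smt (verit) mult_left_mono zero_le_power)
    then show "ibounded U (\<lambda>i. peval n (d i) (abs_coeffs (a i)) (z i))"
      unfolding ibounded_def by blast
  next
    fix z :: "'i \<Rightarrow> nat \<Rightarrow> complex"
    assume H: "\<forall>z. (\<forall>k<n. ibounded U (\<lambda>i. z i k)) \<longrightarrow> ibounded U (\<lambda>i. peval n (d i) (abs_coeffs (a i)) (z i))"
      and z: "\<forall>k<n. ibounded U (\<lambda>i. z i k)"
    from H[THEN spec[where x="\<lambda>i k. complex_of_real (norm (z i k))"], THEN mp, OF bk[OF z]] obtain M where "eventually (\<lambda>i. norm (peval n (d i) (abs_coeffs (a i)) (\<lambda>k. of_real (norm (z i k)))) \<le> M) U"
      unfolding ibounded_def by blast
    then have "eventually (\<lambda>i. norm (peval n (d i) (a i) (z i)) \<le> M) U"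
      by (rule eventually_mono) (use bck in \<open>blast intro: order_trans\<close>)
    then show "ibounded U (\<lambda>i. peval n (d i) (a i) (z i))"
      unfolding ibounded_def by blast
  qed
  have B: "ipoly_infinitesimal U n d a \<longleftrightarrow> ipoly_abs_infinitesimal U n d a"
    unfolding ipoly_abs_infinitesimal_def ipoly_infinitesimal_def iinfinitesimal_def
  proof (intro iffI allI impI)
    fix z :: "'i \<Rightarrow> nat \<Rightarrow> complex" and r :: real
    assume H: "\<forall>z. (\<forall>k<n. ibounded U (\<lambda>i. z i k)) \<longrightarrow> (\<forall>r>0. eventually (\<lambda>i. norm (peval n (d i) (a i) (z i)) < r) U)"
      and z: "\<forall>k<n. ibounded U (\<lambda>i. z i k)" and r: "r > 0"
    obtain x where xb: "\<forall>k<n. ibounded U (\<lambda>i. x i k)"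
      and ev: "eventually (\<lambda>i. norm (peval n (d i) (abs_coeffs (a i)) (z i)) \<le> 2 ^ n * norm (peval n (d i) (a i) (x i))) U"
      using main[OF z] by blast
    have "r / 2 ^ n > 0" using r by simp
    with H xb have "eventually (\<lambda>i. norm (peval n (d i) (a i) (x i)) < r / 2 ^ n) U"
      by blast
    with ev show "eventually (\<lambda>i. norm (peval n (d i) (abs_coeffs (a i)) (z i)) < r) U"
    proof eventually_elim
      case (elim i)
      have "(2::real) ^ n * norm (peval n (d i) (a i) (x i)) < 2 ^ n * (r / 2 ^ n)"
        using elim(2) by (intro mult_strict_left_mono) auto
      then show ?case using elim(1) by simp
    qed
  next
    fix z :: "'i \<Rightarrow> nat \<Rightarrow> complex" and r :: real
    assume H: "\<forall>z. (\<forall>k<n. ibounded U (\<lambda>i. z i k)) \<longrightarrow> (\<forall>r>0. eventually (\<lambda>i. norm (peval n (d i) (abs_coeffs (a i)) (z i)) < r) U)"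
      and z: "\<forall>k<n. ibounded U (\<lambda>i. z i k)" and r: "r > 0"
    from H[THEN spec[where x="\<lambda>i k. complex_of_real (norm (z i k))"], THEN mp, OF bk[OF z], rule_format, OF r] have "eventually (\<lambda>i. norm (peval n (d i) (abs_coeffs (a i)) (\<lambda>k. of_real (norm (z i k)))) < r) U"
      by blast
    then show "eventually (\<lambda>i. norm (peval n (d i) (a i) (z i)) < r) U"
      by (rule eventually_mono) (use bck in \<open>blast intro: le_less_trans\<close>)
  qed
  from A B show ?thesis ..
qed
end
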